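(* Let $((x_1,\hat{y}_1,\hat{\gamma}_1), \dots, (x_T,\hat{y}_T,\hat{\gamma}_T))$ be a sequence of training examples $x_t \in \mathbb{R}^n$ together with label estimates $\hat{y}_t \in \{\pm 1\}$ and margin estimates $\hat{\gamma}_t > 0$, sorted in descending order of the margin estimates, and with $\|x_t\| \leq R$ for all $t \in \{1,\ldots,T\}$. Let $\hat{\gamma}=\min (\hat{\gamma}_1,\dots,\hat{\gamma}_T)=\hat{\gamma}_T$ and $K=\lceil R/\hat{\gamma} \rceil-1$. Suppose there exists a vector $u \in \mathbb{R}^n$ such that $\hat{y}_t \langle u, x_t\rangle \geq \hat{\gamma}$ for all $t$. Suppose the examples are divided into $K$ regions $1,\ldots,K$ such that every example $x_{t}$ in region $k$ satisfies $\hat{y}_{t}\langle x_{t}, u\rangle \geq k\hat{\gamma}$. Run the perceptron algorithm on this sequence (in the given order, with labels $\hat y_t$). Let $\varepsilon_1,\ldots,\varepsilon_K$ denote the number of mistakes made by the perceptron on the examples in each of the $K$ regions, let $\varepsilon=\sum_{k=1}^K \varepsilon_k$ be the total number of mistakes, and let $\varepsilon_s=\sqrt{\frac{1}{K}\sum_{k=1}^K (\varepsilon_k-\varepsilon/K)^2}$ be the standard deviation of $\{\varepsilon_1,\ldots,\varepsilon_K\}$. Then \[ \sqrt{\varepsilon} \leq \frac{R\|u\| + \sqrt{R^2\|u\|^2+\varepsilon_s K(K+1)^2\sqrt{K-1}\,\hat{\gamma}^2}}{\hat{\gamma}(K+1)} . \]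
   Context: The perceptron algorithm on a sequence $(x_1,\hat y_1),\ldots,(x_T,\hat y_T)$ with $x_t\in\mathbb{R}^n$, $\hat y_t\in\{\pm1\}$: start with $w_1 = 0$; at step $t$, predict the label $\mathrm{sign}(\langle w_t, x_t\rangle)$; a mistake occurs at step $t$ if $\hat y_t \langle w_t, x_t\rangle \le 0$, in which case $w_{t+1} = w_t + \hat y_t x_t$; otherwise $w_{t+1} = w_t$. Here $\langle\cdot,\cdot\rangle$ is the Euclidean inner product and $\|\cdot\|$ the Euclidean norm. *)

theory Defs
  imports "HOL-Analysis.Analysis"
begin

text \<open>Perceptron on examples indexed 1..T. perc_w x y t is the weight vector after
processing the first t examples, i.e. w_(t+1) in the paper's notation; perc_w x y 0 = w_1 = 0.\<close>
fun perc_w :: "(nat \<Rightarrow> 'a::real_inner) \<Rightarrow> (nat \<Rightarrow> real) \<Rightarrow> nat \<Rightarrow> 'a" where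
  "perc_w x y 0 = 0"
| "perc_w x y (Suc t) =
     (if y (Suc t) * (perc_w x y t \<bullet> x (Suc t)) \<le> 0
      then perc_w x y t + y (Suc t) *\<^sub>R x (Suc t)
      else perc_w x y t)"

definition perc_mistake :: "(nat \<Rightarrow> 'a::real_inner) \<Rightarrow> (nat \<Rightarrow> real) \<Rightarrow> nat \<Rightarrow> bool" where
  "perc_mistake x y t \<longleftrightarrow> y t * (perc_w x y (t - 1) \<bullet> x t) \<le> 0"

end

theory Submission
  imports Defs
begin

lemma perc_inv:
  fixes x :: "nat \<Rightarrow> 'a::real_inner" and u :: 'a
  assumes "\<forall>t\<in>{1..T}. y t = 1 \<or> y t = -1"
    and "\<forall>t\<in>{1..T}. norm (x t) \<le> R"
    and "\<forall>t\<in>{1..T}. y t * (x t \<bullet> u) \<ge> r t"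
    and "t \<le> T"
  shows "(norm (perc_w x y t))^2 \<le> R^2 * (\<Sum>s=1..t. if perc_mistake x y s then 1 else 0)
       \<and> perc_w x y t \<bullet> u \<ge> (\<Sum>s=1..t. if perc_mistake x y s then r s else 0)"
  using assms(4)
proof (induction t)
  case 0
  then show ?case by simp
next
  case (Suc t)
  then have IH: "(norm (perc_w x y t))^2 \<le> R^2 * (\<Sum>s=1..t. if perc_mistake x y s then 1 else 0)"
     "perc_w x y t \<bullet> u \<ge> (\<Sum>s=1..t. if perc_mistake x y s then r s else 0)" by auto
  have st: "Suc t \<in> {1..T}" using Suc.prems by auto
  have "y (Suc t) = 1 \<or> y (Suc t) = -1" using assms(1) st by blast
  then have y2: "y (Suc t) ^2 = 1" by auto
  have nx: "(norm (x (Suc t)))^2 \<le> R^2" using assms(2) st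
    by (meson norm_ge_zero power_mono)
  have mu: "y (Suc t) * (x (Suc t) \<bullet> u) \<ge> r (Suc t)" using assms(3) st by auto
  show ?case
  proof (cases "perc_mistake x y (Suc t)")
    case True
    then have m: "y (Suc t) * (perc_w x y t \<bullet> x (Suc t)) \<le> 0" unfolding perc_mistake_def by simp
    let ?w = "perc_w x y t" and ?v = "x (Suc t)" and ?c = "y (Suc t)"
    have e: "perc_w x y (Suc t) = ?w + ?c *\<^sub>R ?v" using m by simp
    have "(norm (?w + ?c *\<^sub>R ?v))^2 = (norm ?w)^2 + 2 * (?c * (?w \<bullet> ?v)) + ?c^2 * (norm ?v)^2"
      unfolding power2_norm_eq_inner by (simp add: inner_add_left inner_add_right inner_commute power2_eq_square algebra_simps)
    also have "\<dots> \<le> (norm ?w)^2 + R^2" using m y2 nx by simp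
    finally have A: "(norm (perc_w x y (Suc t)))^2 \<le> R^2 * (\<Sum>s=1..Suc t. if perc_mistake x y s then 1 else 0)"
      using IH(1) True e by (simp add: algebra_simps)
    have "perc_w x y (Suc t) \<bullet> u = ?w \<bullet> u + ?c * (?v \<bullet> u)" using e by (simp add: inner_add_left)
    then have B: "perc_w x y (Suc t) \<bullet> u \<ge> (\<Sum>s=1..Suc t. if perc_mistake x y s then r s else 0)"
      using IH(2) True mu by simp
    show ?thesis using A B by simp
  next
    case False
    then have "perc_w x y (Suc t) = perc_w x y t" unfolding perc_mistake_def by simp
    then show ?thesis using IH False by simp
  qed
qed


theorem theorem2:
  fixes x :: "nat \<Rightarrow> 'a::euclidean_space"
    and y :: "nat \<Rightarrow> real" and gam :: "nat \<Rightarrow> real"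
    and T :: nat and R :: real and u :: 'a
    and reg :: "nat \<Rightarrow> nat"
    and \<gamma> :: real and K :: nat
    and eps :: "nat \<Rightarrow> real" and \<epsilon> :: real and \<epsilon>s :: real
  assumes T_pos: "T \<ge> 1"
    and labels: "\<forall>t\<in>{1..T}. y t = 1 \<or> y t = -1"
    and margins_pos: "\<forall>t\<in>{1..T}. gam t > 0"
    and sorted: "\<forall>s\<in>{1..T}. \<forall>t\<in>{1..T}. s \<le> t \<longrightarrow> gam t \<le> gam s"
    and bounded: "\<forall>t\<in>{1..T}. norm (x t) \<le> R"
    and gamma_def: "\<gamma> = Min (gam ` {1..T})"
    and K_def: "K = nat (\<lceil>R / \<gamma>\<rceil> - 1)"
    and separable: "\<forall>t\<in>{1..T}. y t * (u \<bullet> x t) \<ge> \<gamma>"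
    and regions: "\<forall>t\<in>{1..T}. reg t \<in> {1..K}"
    and region_margin: "\<forall>t\<in>{1..T}. y t * (x t \<bullet> u) \<ge> real (reg t) * \<gamma>"
    and eps_def: "\<forall>k. eps k = real (card {t\<in>{1..T}. reg t = k \<and> perc_mistake x y t})"
    and total_def: "\<epsilon> = (\<Sum>k=1..K. eps k)"
    and std_def: "\<epsilon>s = sqrt ((1 / real K) * (\<Sum>k=1..K. (eps k - \<epsilon> / real K)^2))"
  shows "sqrt \<epsilon> \<le> (R * norm u + sqrt (R^2 * (norm u)^2
            + \<epsilon>s * real K * (real K + 1)^2 * sqrt (real K - 1) * \<gamma>^2))
          / (\<gamma> * (real K + 1))"
proof -
  let ?M = "\<lambda>s. perc_mistake x y s"
  have ne: "{1..T} \<noteq> {}" using T_pos by auto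
  have gpos: "\<gamma> > 0" unfolding gamma_def using ne margins_pos by (subst Min_gr_iff) auto
  have t1: "(1::nat) \<in> {1..T}" using T_pos by auto
  have K1: "K \<ge> 1" using regions t1 by fastforce
  have R0: "R \<ge> 0" using bounded t1 by (meson norm_ge_zero order_trans)
  have Kr: "real K \<ge> 1" using K1 by simp
  have rm: "\<forall>t\<in>{1..T}. y t * (x t \<bullet> u) \<ge> real (reg t) * \<gamma>" using region_margin by blast
  from perc_inv[OF labels bounded rm order_refl]
  have P1: "(norm (perc_w x y T))^2 \<le> R^2 * (\<Sum>s=1..T. if ?M s then 1 else 0)"
   and P2: "perc_w x y T \<bullet> u \<ge> (\<Sum>s=1..T. if ?M s then real (reg s) * \<gamma> else 0)" by auto
  have epsS: "eps k = (\<Sum>s=1..T. if reg s = k \<and> ?M s then 1 else 0)" for k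
  proof -
    have "eps k = real (card {t\<in>{1..T}. reg t = k \<and> ?M t})" using eps_def by blast
    also have "\<dots> = (\<Sum>t\<in>{t\<in>{1..T}. reg t = k \<and> ?M t}. 1)" by simp
    also have "\<dots> = (\<Sum>s=1..T. if reg s = k \<and> ?M s then 1 else 0)"
      by (rule sum.inter_filter) simp
    finally show ?thesis .
  qed
  have inner: "(\<Sum>k=1..K. f k * (if reg s = k \<and> ?M s then 1 else 0)) = (if ?M s then f (reg s) else 0)"
    if "s \<in> {1..T}" for s and f :: "nat \<Rightarrow> real"
  proof -
    have "reg s \<in> {1..K}" using regions that by blast
    then show ?thesis
      by (cases "?M s") (auto simp: if_distrib[of "\<lambda>z. f _ * z"] cong: if_cong)
  qed
  have swap: "(\<Sum>k=1..K. f k * eps k) = (\<Sum>s=1..T. if ?M s then f (reg s) else 0)" for f :: "nat \<Rightarrow> real"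
  proof -
    have "(\<Sum>k=1..K. f k * eps k) = (\<Sum>k=1..K. \<Sum>s=1..T. f k * (if reg s = k \<and> ?M s then 1 else 0))"
      by (simp add: epsS sum_distrib_left)
    also have "\<dots> = (\<Sum>s=1..T. \<Sum>k=1..K. f k * (if reg s = k \<and> ?M s then 1 else 0))"
      by (rule sum.swap)
    also have "\<dots> = (\<Sum>s=1..T. if ?M s then f (reg s) else 0)"
      by (rule sum.cong[OF refl]) (rule inner)
    finally show ?thesis .
  qed
  have Eq1: "\<epsilon> = (\<Sum>s=1..T. if ?M s then 1 else 0)"
    using swap[of "\<lambda>_. 1"] total_def by simp
  define S where "S = (\<Sum>k=1..K. real k * eps k)"
  have Eq2: "S * \<gamma> = (\<Sum>s=1..T. if ?M s then real (reg s) * \<gamma> else 0)"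
    unfolding S_def swap[of real] sum_distrib_right by (rule sum.cong) auto
  have e0: "\<epsilon> \<ge> 0" using Eq1 by (simp add: sum_nonneg)
  define b where "b = R * norm u"
  have b0: "b \<ge> 0" unfolding b_def using R0 by simp
  have nw: "norm (perc_w x y T) \<le> R * sqrt \<epsilon>"
  proof -
    have "(norm (perc_w x y T))^2 \<le> (R * sqrt \<epsilon>)^2" using P1 Eq1 e0 by (simp add: power_mult_distrib)
    then show ?thesis using R0 e0 by (meson mult_nonneg_nonneg power2_le_imp_le real_sqrt_ge_zero)
  qed
  have key: "S * \<gamma> \<le> b * sqrt \<epsilon>"
  proof -
    have "S * \<gamma> \<le> perc_w x y T \<bullet> u" using P2 Eq2 by simp
    also have "\<dots> \<le> norm (perc_w x y T) * norm u" by (rule norm_cauchy_schwarz)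
    also have "\<dots> \<le> R * sqrt \<epsilon> * norm u" using nw by (simp add: mult_right_mono)
    finally show ?thesis unfolding b_def by (simp add: algebra_simps)
  qed
  define d where "d k = eps k - \<epsilon> / real K" for k
  define m where "m = (real K + 1) / 2"
  have sumd: "(\<Sum>k=1..K. d k) = 0"
    unfolding d_def sum_subtractf total_def using K1 by simp
  have sumk: "(\<Sum>k=1..K. real k) = real K * (real K + 1) / 2"
    using double_gauss_sum_from_Suc_0[of K, where ?'a=real] by simp
  have Sdec: "S = \<epsilon> * (real K + 1) / 2 + (\<Sum>k=1..K. (real k - m) * d k)"
  proof -
    have "S = (\<Sum>k=1..K. real k * (\<epsilon> / real K) + (real k - m) * d k + m * d k)"
      unfolding S_def d_def using Kr by (intro sum.cong) (auto simp: field_simps)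
    also have "\<dots> = (\<Sum>k=1..K. real k) * (\<epsilon> / real K) + (\<Sum>k=1..K. (real k - m) * d k) + m * (\<Sum>k=1..K. d k)"
      by (simp add: sum.distrib sum_distrib_left sum_distrib_right sum_divide_distrib)
    also have "\<dots> = \<epsilon> * (real K + 1) / 2 + (\<Sum>k=1..K. (real k - m) * d k)"
      using sumd sumk Kr by (simp add: field_simps)
    finally show ?thesis .
  qed
  have sq: "(\<Sum>k=1..K. (real k - m)^2) \<le> real K * ((real K - 1) / 2)^2"
  proof -
    have "(\<Sum>k=1..K. (real k - m)^2) \<le> (\<Sum>k=1..K. ((real K - 1) / 2)^2)"
    proof (rule sum_mono)
      fix k assume "k \<in> {1..K}"
      then have "1 \<le> real k" "real k \<le> real K" by auto
      then have "\<bar>real k - m\<bar> \<le> (real K - 1) / 2" unfolding m_def abs_le_iff by (intro conjI) (simp_all add: field_simps)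
      then show "(real k - m)^2 \<le> ((real K - 1) / 2)^2"
        by (metis abs_ge_zero order_trans power2_abs power_mono)
    qed
    then show ?thesis by simp
  qed
  have Dd: "(\<Sum>k=1..K. (d k)^2) = real K * \<epsilon>s^2"
  proof -
    have "\<epsilon>s^2 = (1 / real K) * (\<Sum>k=1..K. (d k)^2)" unfolding std_def d_def
      apply (subst real_sqrt_pow2)
       apply (rule mult_nonneg_nonneg)
        apply simp
       apply (rule sum_nonneg)
       apply simp
      apply (rule refl)
      done
    then show ?thesis using Kr by (simp add: field_simps)
  qed
  have es0: "\<epsilon>s \<ge> 0" unfolding std_def
    by (intro real_sqrt_ge_zero mult_nonneg_nonneg sum_nonneg) auto
  have CS: "(\<Sum>k=1..K. (real k - m) * d k)^2 \<le> (real K * (real K - 1) / 2 * \<epsilon>s)^2"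
  proof -
    have "(\<Sum>k=1..K. (real k - m) * d k)^2 \<le> (\<Sum>k=1..K. (real k - m)^2) * (\<Sum>k=1..K. (d k)^2)"
      by (rule Cauchy_Schwarz_ineq_sum)
    also have "\<dots> \<le> real K * ((real K - 1) / 2)^2 * (real K * \<epsilon>s^2)"
      unfolding Dd using sq Kr by (intro mult_right_mono) auto
    also have "\<dots> = (real K * (real K - 1) / 2 * \<epsilon>s)^2" by (simp add: power2_eq_square field_simps)
    finally show ?thesis .
  qed
  have CS2: "- (\<Sum>k=1..K. (real k - m) * d k) \<le> real K * (real K - 1) / 2 * \<epsilon>s"
  proof -
    have nn: "0 \<le> real K * (real K - 1) / 2 * \<epsilon>s" using Kr es0 by simp
    have "\<bar>\<Sum>k=1..K. (real k - m) * d k\<bar>^2 \<le> (real K * (real K - 1) / 2 * \<epsilon>s)^2"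
      unfolding power2_abs by (rule CS)
    then have "\<bar>\<Sum>k=1..K. (real k - m) * d k\<bar> \<le> real K * (real K - 1) / 2 * \<epsilon>s"
      using nn by (rule power2_le_imp_le)
    then show ?thesis by linarith
  qed
  have S2: "2 * S \<ge> \<epsilon> * (real K + 1) - real K * (real K - 1) * \<epsilon>s"
  proof -
    have "real K * (real K - 1) / 2 * \<epsilon>s = (real K * (real K - 1) * \<epsilon>s) / 2" by simp
    then show ?thesis using Sdec CS2 by linarith
  qed
  define s where "s = sqrt \<epsilon>"
  have s0: "s \<ge> 0" and ss: "s^2 = \<epsilon>" unfolding s_def using e0 by auto
  define D where "D = \<epsilon>s * real K * (real K + 1)^2 * sqrt (real K - 1) * \<gamma>^2"
  have sqK: "real K - 1 \<le> (real K + 1) * sqrt (real K - 1)"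
  proof -
    have t0: "real K - 1 \<ge> 0" using Kr by simp
    have "sqrt (real K - 1) \<le> sqrt ((real K + 1)^2)"
      by (rule real_sqrt_le_mono) (simp add: power2_eq_square algebra_simps)
    also have "\<dots> = real K + 1" by simp
    finally have h: "sqrt (real K - 1) \<le> real K + 1" .
    have "real K - 1 = sqrt (real K - 1) * sqrt (real K - 1)" using t0 by simp
    also have "\<dots> \<le> (real K + 1) * sqrt (real K - 1)"
      using h t0 by (intro mult_right_mono) auto
    finally show ?thesis .
  qed
  have D0: "D \<ge> 0" unfolding D_def using es0 Kr by simp
  have KD: "\<gamma>^2 * (real K + 1) * (real K * (real K - 1) * \<epsilon>s) \<le> D"
  proof -
    have "\<gamma>^2 * (real K + 1) * (real K * (real K - 1) * \<epsilon>s)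
        = (\<gamma>^2 * (real K + 1) * real K * \<epsilon>s) * (real K - 1)" by (simp add: algebra_simps)
    also have "\<dots> \<le> (\<gamma>^2 * (real K + 1) * real K * \<epsilon>s) * ((real K + 1) * sqrt (real K - 1))"
      using sqK es0 Kr by (intro mult_left_mono) auto
    also have "\<dots> = D" unfolding D_def by (simp add: power2_eq_square algebra_simps)
    finally show ?thesis .
  qed
  have main: "\<gamma> * (real K + 1) * s \<le> b + sqrt (b^2 + D)"
  proof (cases "\<gamma> * (real K + 1) * s \<le> b")
    case True
    have "0 \<le> sqrt (b^2 + D)" using D0 by simp
    then show ?thesis using True by linarith
  next
    case False
    have "(\<gamma> * (real K + 1) * s - b)^2
        = \<gamma>^2 * (real K + 1)^2 * \<epsilon> - 2 * (real K + 1) * \<gamma> * (b * s) + b^2"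
      unfolding ss[symmetric] by (simp add: power2_eq_square algebra_simps)
    also have "\<dots> \<le> \<gamma>^2 * (real K + 1)^2 * \<epsilon> - 2 * (real K + 1) * \<gamma> * (S * \<gamma>) + b^2"
      using key gpos Kr unfolding s_def by (simp add: mult_left_mono)
    also have "\<dots> = \<gamma>^2 * (real K + 1) * ((real K + 1) * \<epsilon> - 2 * S) + b^2"
      by (simp add: power2_eq_square algebra_simps)
    also have "\<dots> \<le> \<gamma>^2 * (real K + 1) * (real K * (real K - 1) * \<epsilon>s) + b^2"
    proof -
      have "(real K + 1) * \<epsilon> - 2 * S \<le> real K * (real K - 1) * \<epsilon>s" using S2 by (simp add: algebra_simps)
      moreover have "0 \<le> \<gamma>^2 * (real K + 1)" using Kr by simp
      ultimately show ?thesis by (simp add: mult_left_mono)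
    qed
    also have "\<dots> \<le> b^2 + D" using KD by simp
    finally have "(\<gamma> * (real K + 1) * s - b)^2 \<le> b^2 + D" .
    then have "\<gamma> * (real K + 1) * s - b \<le> sqrt (b^2 + D)" by (rule real_le_rsqrt)
    then show ?thesis by simp
  qed
  have pos: "\<gamma> * (real K + 1) > 0" using gpos Kr by simp
  have "s \<le> (b + sqrt (b^2 + D)) / (\<gamma> * (real K + 1))"
    using main by (subst pos_le_divide_eq[OF pos]) (simp add: mult.commute)
  then show ?thesis unfolding s_def b_def D_def by (simp add: power_mult_distrib)
qed

end
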